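(* Let $T$ be an algorithm that is given access to a function via a $t$-online-erasure oracle and performs a specified computational task (i.e., must output a correct answer for its input function). Suppose that for every input function and every adversarial strategy, with probability at least $2/3$, $T$ outputs a correct answer and none of its queries returns $\perp$ during its execution. Then, for the same task, when $T$ is given access to the input function via a $t$-online-corruption oracle (with any adversarial strategy), it outputs a correct answer with probability at least $2/3$.
   Context: An algorithm accesses an input function $f:D\to R$ ($D$ finite) only through an oracle $\mathcal{O}$, querying points one at a time and receiving $\mathcal{O}(x)$; initially $\mathcal{O}(x)=f(x)$ for all $x$. A $t$-online-erasure oracle, after answering each query, may set $\mathcal{O}(x)=\perp$ (a special "erased" symbol) for up to $t$ points $x$; a $t$-online-corruption oracle, after answering each query, may instead replace $\mathcal{O}(x)$ at up to $t$ points $x$ by arbitrary values in the range of $f$. Modified values are used for all future queries. An adversarial strategy (a distribution over decision trees dictating which points to modify, as a function of the input and the queries so far) may depend on $f$, the queries and answers so far, and the algorithm's code, but not on the algorithm's future random coins. *)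

theory Defs
  imports "HOL-Probability.Probability_Mass_Function"
begin

text \<open>Model of oracle algorithms. The oracle answer symbol None plays the role of the
  erased symbol (bot). A history is the chronological list of (query point, answer) pairs.\<close>

datatype ('d, 'o) action = Query 'd | Output 'o

type_synonym ('d, 'r) hist = "('d \<times> 'r option) list"

text \<open>A deterministic algorithm (for a fixed outcome of its random coins) maps the
  history so far to its next action. A randomized algorithm is a coin distribution
  together with such a map for every coin outcome.\<close>

type_synonym ('d, 'r, 'o) det_alg = "('d, 'r) hist \<Rightarrow> ('d, 'o) action"

text \<open>Deterministic corruption strategy:
  given the history so far, choose a partial map of points to new values.
  (The input function f is fixed before the strategy distribution is chosen, so the
  strategy may depend on it.)\<close>

type_synonym ('d, 'r) erase_strategy = "('d \<times> 'r option) list \<Rightarrow> 'd set"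
type_synonym ('d, 'r) corrupt_strategy = "('d \<times> 'r) list \<Rightarrow> ('d \<Rightarrow> 'r option)"

definition valid_erase_adv :: "nat \<Rightarrow> ('d, 'r) erase_strategy pmf \<Rightarrow> bool" where
  "valid_erase_adv t Adv \<longleftrightarrow> (\<forall>s\<in>set_pmf Adv. \<forall>h. finite (s h) \<and> card (s h) \<le> t)"

definition valid_corrupt_adv :: "nat \<Rightarrow> ('d, 'r) corrupt_strategy pmf \<Rightarrow> bool" where
  "valid_corrupt_adv t Adv \<longleftrightarrow> (\<forall>s\<in>set_pmf Adv. \<forall>h. finite (dom (s h)) \<and> card (dom (s h)) \<le> t)"

text \<open>Returns the output (None if the algorithm exceeds its query budget) and the final history.\<close>

fun run_erase :: "nat \<Rightarrow> ('d, 'r, 'o) det_alg \<Rightarrow> ('d, 'r) erase_strategy \<Rightarrow> ('d \<Rightarrow> 'r)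
    \<Rightarrow> 'd set \<Rightarrow> ('d, 'r) hist \<Rightarrow> 'o option \<times> ('d, 'r) hist" where
  "run_erase 0 A s f X h =
     (case A h of Output o' \<Rightarrow> (Some o', h) | Query x \<Rightarrow> (None, h))"
| "run_erase (Suc n) A s f X h =
     (case A h of Output o' \<Rightarrow> (Some o', h)
      | Query x \<Rightarrow> (let h' = h @ [(x, if x \<in> X then None else Some (f x))]
                   in run_erase n A s f (X \<union> s h') h'))"

text \<open>Execution against a t-online-corruption oracle; g is the current oracle content.\<close>

fun run_corrupt :: "nat \<Rightarrow> ('d, 'r, 'o) det_alg \<Rightarrow> ('d, 'r) corrupt_strategy
    \<Rightarrow> ('d \<Rightarrow> 'r) \<Rightarrow> ('d \<times> 'r) list \<Rightarrow> 'o option" where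
  "run_corrupt 0 A s g h =
     (case A (map (\<lambda>(x, v). (x, Some v)) h) of Output o' \<Rightarrow> Some o' | Query x \<Rightarrow> None)"
| "run_corrupt (Suc n) A s g h =
     (case A (map (\<lambda>(x, v). (x, Some v)) h) of Output o' \<Rightarrow> Some o'
      | Query x \<Rightarrow> (let h' = h @ [(x, g x)]; m = s h'
                   in run_corrupt n A s (\<lambda>y. case m y of None \<Rightarrow> g y | Some v \<Rightarrow> v) h'))"

definition erase_success_prob ::
  "nat \<Rightarrow> 'c pmf \<Rightarrow> ('c \<Rightarrow> ('d, 'r, 'o) det_alg) \<Rightarrow> (('d \<Rightarrow> 'r) \<Rightarrow> 'o \<Rightarrow> bool)
   \<Rightarrow> ('d \<Rightarrow> 'r) \<Rightarrow> ('d, 'r) erase_strategy pmf \<Rightarrow> real" where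
  "erase_success_prob q C A correct f Adv =
     measure_pmf.prob (pair_pmf C Adv)
       {(c, s). case run_erase q (A c) s f {} [] of (res, h) \<Rightarrow>
          (\<exists>o'. res = Some o' \<and> correct f o') \<and> (\<forall>(x, a)\<in>set h. a \<noteq> None)}"

definition corrupt_success_prob ::
  "nat \<Rightarrow> 'c pmf \<Rightarrow> ('c \<Rightarrow> ('d, 'r, 'o) det_alg) \<Rightarrow> (('d \<Rightarrow> 'r) \<Rightarrow> 'o \<Rightarrow> bool)
   \<Rightarrow> ('d \<Rightarrow> 'r) \<Rightarrow> ('d, 'r) corrupt_strategy pmf \<Rightarrow> real" where
  "corrupt_success_prob q C A correct f Adv =
     measure_pmf.prob (pair_pmf C Adv)
       {(c, s). \<exists>o'. run_corrupt q (A c) s f [] = Some o' \<and> correct f o'}"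

end

theory Submission
  imports Defs
begin

lemma run_erase_hist_mono:
  "set h \<subseteq> set (snd (run_erase n A s f X h))"
proof (induction n arbitrary: X h)
  case 0 then show ?case by (auto split: action.splits)
next
  case (Suc n)
  show ?case
  proof (cases "A h")
    case (Query x)
    let ?h' = "h @ [(x, if x \<in> X then None else Some (f x))]"
    have "set h \<subseteq> set ?h'" by auto
    also have "\<dots> \<subseteq> set (snd (run_erase n A s f (X \<union> s ?h') ?h'))" by (rule Suc.IH)
    finally show ?thesis using Query by (simp add: Let_def)
  qed (simp)
qed

definition E :: "('d, 'r) corrupt_strategy \<Rightarrow> ('d, 'r) erase_strategy" where
  "E s h = dom (s (map (\<lambda>(x, a). (x, the a)) h))"

lemma strip_lift: "map (\<lambda>(x, a). (x, the a)) (map (\<lambda>(x, v). (x, Some v)) h) = h"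
  by (induction h) auto

lemma key:
  "(\<forall>y. y \<notin> X \<longrightarrow> g y = f y) \<Longrightarrow>
   run_erase n A (E s) f X (map (\<lambda>(x, v). (x, Some v)) hc) = (res, h) \<Longrightarrow>
   res = Some o' \<Longrightarrow> (\<forall>(x, a)\<in>set h. a \<noteq> None) \<Longrightarrow>
   run_corrupt n A s g hc = Some o'"
proof (induction n arbitrary: X g hc res h)
  case 0 then show ?case by (auto split: action.splits)
next
  case (Suc n)
  show ?case
  proof (cases "A (map (\<lambda>(x, v). (x, Some v)) hc)")
    case (Output o2)
    then show ?thesis using Suc.prems by simp
  next
    case (Query x)
    let ?L = "map (\<lambda>(x, v). (x, Some v)) hc"
    let ?h' = "?L @ [(x, if x \<in> X then None else Some (f x))]"
    have run: "run_erase n A (E s) f (X \<union> E s ?h') ?h' = (res, h)"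
      using Suc.prems(2) Query by (simp add: Let_def)
    have "set ?h' \<subseteq> set h" using run_erase_hist_mono[of ?h' n A "E s" f "X \<union> E s ?h'"] run by simp
    hence xX: "x \<notin> X" using Suc.prems(4) by (auto split: if_splits)
    define hc' where "hc' = hc @ [(x, g x)]"
    have gx: "g x = f x" using xX Suc.prems(1) by auto
    have hh: "?h' = map (\<lambda>(x, v). (x, Some v)) hc'" using xX gx by (simp add: hc'_def)
    have Es: "E s ?h' = dom (s hc')" unfolding hh E_def strip_lift ..
    define g' where "g' = (\<lambda>y. case s hc' y of None \<Rightarrow> g y | Some v \<Rightarrow> v)"
    have inv: "\<forall>y. y \<notin> X \<union> E s ?h' \<longrightarrow> g' y = f y"
      using Suc.prems(1) unfolding Es g'_def by (auto split: option.splits)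
    have run2: "run_erase n A (E s) f (X \<union> E s ?h') (map (\<lambda>(x, v). (x, Some v)) hc') = (res, h)"
      using run hh by simp
    have "run_corrupt n A s g' hc' = Some o'"
      by (rule Suc.IH[OF inv run2 Suc.prems(3) Suc.prems(4)])
    then show ?thesis using Query by (simp add: Let_def hc'_def g'_def)
  qed
qed

theorem lemma1p8:
  fixes q t :: nat
    and C :: "'c pmf"
    and A :: "'c \<Rightarrow> ('d::finite, 'r, 'o) det_alg"
    and correct :: "('d \<Rightarrow> 'r) \<Rightarrow> 'o \<Rightarrow> bool"
  assumes "\<forall>f (Adv :: ('d, 'r) erase_strategy pmf). valid_erase_adv t Adv \<longrightarrow>
             erase_success_prob q C A correct f Adv \<ge> 2/3"
  shows "\<forall>f (Adv :: ('d, 'r) corrupt_strategy pmf). valid_corrupt_adv t Adv \<longrightarrow>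
             corrupt_success_prob q C A correct f Adv \<ge> 2/3"
proof (intro allI impI)
  fix f :: "'d \<Rightarrow> 'r" and Adv :: "('d, 'r) corrupt_strategy pmf"
  assume v: "valid_corrupt_adv t Adv"
  have ve: "valid_erase_adv t (map_pmf E Adv)"
    using v unfolding valid_corrupt_adv_def valid_erase_adv_def E_def by auto
  let ?S = "{(c, s). case run_erase q (A c) s f {} [] of (res, h) \<Rightarrow>
          (\<exists>o'. res = Some o' \<and> correct f o') \<and> (\<forall>(x, a)\<in>set h. a \<noteq> None)}"
  let ?T = "{(c, s). \<exists>o'. run_corrupt q (A c) s f [] = Some o' \<and> correct f o'}"
  have "2/3 \<le> erase_success_prob q C A correct f (map_pmf E Adv)"
    using assms ve by blast
  also have "\<dots> = measure_pmf.prob (pair_pmf C Adv) (apsnd E -` ?S)"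
    unfolding erase_success_prob_def pair_map_pmf2 by simp
  also have "\<dots> \<le> measure_pmf.prob (pair_pmf C Adv) ?T"
  proof (rule measure_pmf.finite_measure_mono)
    show "apsnd E -` ?S \<subseteq> ?T"
    proof
      fix y assume "y \<in> apsnd E -` ?S"
      then obtain c s where y: "y = (c, s)" and "(c, E s) \<in> ?S" by (cases y) auto
      then obtain res h o' where r: "run_erase q (A c) (E s) f {} [] = (res, h)"
        and "res = Some o'" "correct f o'" "\<forall>(x, a)\<in>set h. a \<noteq> None"
        by (auto split: prod.splits)
      moreover have "run_erase q (A c) (E s) f {} (map (\<lambda>(x, v). (x, Some v)) []) = (res, h)"
        using r by simp
      ultimately have "run_corrupt q (A c) s f [] = Some o'"
        using key[of "{}" f f q "A c" s "[]" res h o'] by auto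
      then show "y \<in> ?T"
        using \<open>correct f o'\<close> y by blast
    qed
  qed simp
  finally show "2/3 \<le> corrupt_success_prob q C A correct f Adv"
    unfolding corrupt_success_prob_def .
qed

end
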